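(* Let $d\ge 2$ be an integer, $F\in(0,1]$ and $k\in(0,1)$. For each integer $n\ge 1$ let $C_n$ be $\sum_s\frac{4\lambda^+_s\lambda^-_s}{\lambda^+_s+\lambda^-_s}$ computed from the eigenvalues of the $nd$-qubit depolarized GHZ state with fidelity $k^{n-1}F$ (terms with $\lambda^+_s+\lambda^-_s=0$ taken to be $0$). Then $$\lim_{n\to\infty} d\,(1-C_n)\,n^2=0.$$
   Context: The $N$-qubit depolarized GHZ state with fidelity $G\in[0,1]$ is $G|\mathrm{GHZ}_N\rangle\langle\mathrm{GHZ}_N|+\frac{1-G}{2^N-1}(I-|\mathrm{GHZ}_N\rangle\langle\mathrm{GHZ}_N|)$ with $|\mathrm{GHZ}_N\rangle=(|0\cdots0\rangle+|1\cdots1\rangle)/\sqrt2$. It is diagonal in the GHZ basis $|G^\pm_s\rangle=(|s\rangle\pm|\bar s\rangle)/\sqrt2$, where $s$ ranges over one representative of each pair $\{s,\bar s\}$ of complementary bit strings of length $N$, with eigenvalues $\lambda^\pm_s$. The quantity $d(1-C_n)n^2$ is the quantum Fisher information for estimating the normalized average $\frac{1}{\sqrt d}\sum_i x_i$ of phases encoded by $\exp[-i\sum_i x_iH_i]$, $H_i=\frac12\sum_{k}\sigma_z^{(i,k)}$ on the $n$ qubits of node $i$. *)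

theory Defs
  imports Complex_Main
begin

(* Computational basis of N qubits: bit strings encoded as naturals i < 2^N.
   The complementary bit string of i is 2^N - 1 - i. *)

definition comp_bits :: "nat \<Rightarrow> nat \<Rightarrow> nat" where
  "comp_bits N i = 2^N - 1 - i"

definition ghz_vec :: "nat \<Rightarrow> nat \<Rightarrow> real" where
  "ghz_vec N i = (if i = 0 \<or> i = 2^N - 1 then 1 / sqrt 2 else 0)"

definition dep_ghz :: "nat \<Rightarrow> real \<Rightarrow> nat \<Rightarrow> nat \<Rightarrow> real" where
  "dep_ghz N G i j =
     G * ghz_vec N i * ghz_vec N j
     + (1 - G) / (2^N - 1) * ((if i = j then 1 else 0) - ghz_vec N i * ghz_vec N j)"

(* GHZ basis vector |G^{+-}_s> = (|s> +- |s-bar>)/sqrt 2, sg = 1 or -1 *)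
definition ghz_basis :: "nat \<Rightarrow> nat \<Rightarrow> real \<Rightarrow> nat \<Rightarrow> real" where
  "ghz_basis N s sg i =
     (if i = s then 1 / sqrt 2 else 0) + sg * (if i = comp_bits N s then 1 / sqrt 2 else 0)"

(* eigenvalue lambda^{+-}_s = <G^{+-}_s| rho |G^{+-}_s> (rho is diagonal in the GHZ basis) *)
definition ghz_eig :: "nat \<Rightarrow> real \<Rightarrow> nat \<Rightarrow> real \<Rightarrow> real" where
  "ghz_eig N G s sg =
     (\<Sum>i<2^N. \<Sum>j<2^N. ghz_basis N s sg i * dep_ghz N G i j * ghz_basis N s sg j)"

(* C = sum over representatives s (those with leading bit 0, i.e. s < 2^(N-1))
   of 4 l+ l- / (l+ + l-), terms with l+ + l- = 0 taken to be 0 *)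
definition C_ghz :: "nat \<Rightarrow> real \<Rightarrow> real" where
  "C_ghz N G =
     (\<Sum>s<2^(N-1).
        (let a = ghz_eig N G s 1; b = ghz_eig N G s (-1)
         in if a + b = 0 then 0 else 4 * a * b / (a + b)))"

end

theory Submission imports Defs begin

lemma sum_two:
  fixes f :: "nat \<Rightarrow> real"
  assumes "a < M" "c < M" "a \<noteq> c" "\<And>i. i \<noteq> a \<Longrightarrow> i \<noteq> c \<Longrightarrow> f i = 0"
  shows "(\<Sum>i<M. f i) = f a + f c"
proof -
  have "(\<Sum>i<M. f i) = (\<Sum>i\<in>{a,c}. f i)"
    by (rule sum.mono_neutral_right) (use assms in auto)
  thus ?thesis using assms by simp
qed

lemma comp_facts:
  assumes "N \<ge> 1" "s < 2^(N-1)"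
  shows "comp_bits N s < 2^N" "s < 2^N" "s \<noteq> comp_bits N s" "s \<noteq> 2^N - 1"
        "comp_bits N s \<noteq> 0" "(comp_bits N s = 2^N - 1) = (s = 0)"
proof -
  have e: "(2::nat)^N = 2 * 2^(N-1)" using assms(1)
    by (metis One_nat_def Suc_diff_le diff_Suc_1 power_Suc)
  show "comp_bits N s < 2^N" "s < 2^N" "s \<noteq> comp_bits N s" "s \<noteq> 2^N - 1"
        "comp_bits N s \<noteq> 0" "(comp_bits N s = 2^N - 1) = (s = 0)"
    using assms(2) e by (auto simp: comp_bits_def)
qed

lemma eig_formula:
  assumes "N \<ge> 1" "s < 2^(N-1)"
  shows "ghz_eig N G s sg = (1/2) * (dep_ghz N G s s + sg * dep_ghz N G s (comp_bits N s)
          + sg * dep_ghz N G (comp_bits N s) s + sg^2 * dep_ghz N G (comp_bits N s) (comp_bits N s))"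
proof -
  note cf = comp_facts[OF assms]
  let ?c = "comp_bits N s"
  let ?b = "ghz_basis N s sg"
  have bs: "?b s = 1/sqrt 2" using cf by (simp add: ghz_basis_def)
  have bc: "?b ?c = sg/sqrt 2" using cf by (simp add: ghz_basis_def)
  have b0: "?b i = 0" if "i \<noteq> s" "i \<noteq> ?c" for i using that by (simp add: ghz_basis_def)
  have inner: "(\<Sum>j<2^N. ?b i * dep_ghz N G i j * ?b j) = ?b i * dep_ghz N G i s * ?b s + ?b i * dep_ghz N G i ?c * ?b ?c" for i
    by (rule sum_two) (use cf b0 in auto)
  have "ghz_eig N G s sg = (\<Sum>i<2^N. ?b i * dep_ghz N G i s * ?b s + ?b i * dep_ghz N G i ?c * ?b ?c)"
    unfolding ghz_eig_def inner ..
  also have "\<dots> = (?b s * dep_ghz N G s s * ?b s + ?b s * dep_ghz N G s ?c * ?b ?c) + (?b ?c * dep_ghz N G ?c s * ?b s + ?b ?c * dep_ghz N G ?c ?c * ?b ?c)"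
    by (rule sum_two) (use cf b0 in auto)
  also have "\<dots> = (1/2) * (dep_ghz N G s s + sg * dep_ghz N G s ?c
          + sg * dep_ghz N G ?c s + sg^2 * dep_ghz N G ?c ?c)"
    unfolding bs bc by (simp add: field_simps power2_eq_square)
  finally show ?thesis .
qed


lemma eig_vals:
  fixes G sg :: real
  assumes "N \<ge> 1" "s < 2^(N-1)" "sg = 1 \<or> sg = -1"
  defines "p \<equiv> (1 - G) / (2^N - 1)"
  shows "ghz_eig N G s sg = (if s = 0 then (if sg = 1 then G else p) else p)"
proof -
  note cf = comp_facts[OF assms(1,2)]
  have sg2: "sg^2 = 1" using assms(3) by auto
  show ?thesis
  proof (cases "s = 0")
    case True
    have v: "ghz_vec N s = 1/sqrt 2" "ghz_vec N (comp_bits N s) = 1/sqrt 2"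
      using cf True by (auto simp: ghz_vec_def)
    have "ghz_eig N G s sg = (1/2) * ((G/2 + p/2) + sg * (G/2 - p/2) + sg * (G/2 - p/2) + sg^2 * (G/2 + p/2))"
      unfolding eig_formula[OF assms(1,2)] dep_ghz_def v p_def using cf
      by (simp add: field_simps power2_eq_square)
    also have "\<dots> = (if sg = 1 then G else p)" using assms(3) by (auto simp: field_simps)
    finally show ?thesis using True by simp
  next
    case False
    have v: "ghz_vec N s = 0" "ghz_vec N (comp_bits N s) = 0"
      using cf False by (auto simp: ghz_vec_def)
    have "ghz_eig N G s sg = (1/2) * (p + sg^2 * p)"
      unfolding eig_formula[OF assms(1,2)] dep_ghz_def v p_def using cf
      by (simp add: field_simps)
    also have "\<dots> = p" using sg2 by simp
    finally show ?thesis using False by simp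
  qed
qed

lemma C_formula:
  fixes G :: real
  assumes "N \<ge> 1"
  defines "p \<equiv> (1 - G) / (2^N - 1)"
  shows "C_ghz N G = 4 * G * p / (G + p) + (2^(N-1) - 1) * (2 * p)"
proof -
  define t where "t s = (let a = ghz_eig N G s 1; b = ghz_eig N G s (-1)
         in if a + b = 0 then 0 else 4 * a * b / (a + b))" for s
  have t0: "t 0 = 4 * G * p / (G + p)"
  proof -
    have "ghz_eig N G 0 1 = G" "ghz_eig N G 0 (-1) = p"
      using eig_vals[OF assms(1), of 0] unfolding p_def by auto
    thus ?thesis unfolding t_def Let_def by auto
  qed
  have ts: "t s = 2 * p" if "0 < s" "s < 2^(N-1)" for s
  proof -
    have "ghz_eig N G s 1 = p" "ghz_eig N G s (-1) = p"
      using eig_vals[OF assms(1) that(2)] that(1) unfolding p_def by auto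
    thus ?thesis unfolding t_def Let_def by (auto simp: power2_eq_square)
  qed
  have "C_ghz N G = (\<Sum>s<2^(N-1). t s)" unfolding C_ghz_def t_def ..
  also have "\<dots> = t 0 + (\<Sum>s\<in>{1..<(2::nat)^(N-1)}. t s)"
    using sum.atLeast_Suc_lessThan[of 0 "(2::nat)^(N-1)" t] by (simp add: atLeast0LessThan)
  also have "(\<Sum>s\<in>{1..<(2::nat)^(N-1)}. t s) = (\<Sum>s\<in>{1..<(2::nat)^(N-1)}. 2 * p)"
    by (rule sum.cong) (auto intro: ts)
  finally show ?thesis using t0 by (simp add: of_nat_diff)
qed


lemma one_minus_C_bounds:
  fixes G :: real
  assumes "N \<ge> 1" "0 < G" "G \<le> 1"
  shows "0 \<le> 1 - C_ghz N G" "1 - C_ghz N G \<le> G + 2 / 2^N"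
proof -
  define p where "p = (1 - G) / (2^N - 1)"
  define M :: real where "M = 2^N"
  have M2: "M \<ge> 2" unfolding M_def using assms(1)
    by (metis One_nat_def numeral_le_iff numerals(2) power_increasing power_one_right semiring_norm(69) zero_less_numeral not_one_le_zero not_less_eq_eq le_numeral_extra(4) order.trans one_le_numeral pos2) 
  have hM: "(2::real)^(N-1) = M/2" unfolding M_def using assms(1)
    by (metis One_nat_def Suc_diff_le diff_Suc_1 nonzero_mult_div_cancel_left power_Suc zero_neq_numeral)
  have p0: "p \<ge> 0" unfolding p_def using assms M2 M_def by auto
  have pM: "(M - 1) * p = 1 - G" unfolding p_def M_def using M2 M_def by auto
  have Gp: "G + p > 0" using p0 assms by auto
  have C: "C_ghz N G = 4 * G * p / (G + p) + (M/2 - 1) * (2 * p)"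
    using C_formula[OF assms(1), of G] hM unfolding p_def by simp
  have eq: "1 - C_ghz N G = (G - p)^2 / (G + p)"
  proof -
    have a: "1 - (M/2 - 1) * (2 * p) = G + p" using pM by (simp add: algebra_simps)
    have "1 - C_ghz N G = (G + p) - 4 * G * p / (G + p)" unfolding C using a by linarith
    also have "\<dots> = (G - p)^2 / (G + p)" using Gp by (simp add: field_simps power2_eq_square)
    finally show ?thesis .
  qed
  show "0 \<le> 1 - C_ghz N G" unfolding eq using Gp by simp
  have "(G - p)^2 / (G + p) \<le> G + p"
    using Gp p0 assms by (simp add: divide_le_eq power2_eq_square) (simp add: algebra_simps)
  moreover have "p \<le> 2 / M"
  proof -
    have "p = (1 - G) / (M - 1)" unfolding p_def M_def ..
    also have "\<dots> \<le> 1 / (M - 1)" using M2 assms by (simp add: divide_right_mono)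
    also have "\<dots> \<le> 2 / M" using M2 by (simp add: divide_simps)
    finally show ?thesis .
  qed
  ultimately show "1 - C_ghz N G \<le> G + 2 / 2^N" unfolding eq M_def by simp
qed


lemma sq_geom_lim:
  fixes x :: real
  assumes "0 < x" "x < 1"
  shows "(\<lambda>n::nat. (real n)^2 * x ^ n) \<longlonglongrightarrow> 0"
proof -
  have "norm (sqrt x) < 1" using assms by (simp add: real_sqrt_lt_1_iff)
  hence "(\<lambda>n. of_nat n * sqrt x ^ n) \<longlonglongrightarrow> (0::real)" by (rule powser_times_n_limit_0)
  hence "(\<lambda>n. (of_nat n * sqrt x ^ n)^2) \<longlonglongrightarrow> (0::real)"
    using tendsto_power[of _ 0 sequentially 2] by fastforce
  moreover have "(of_nat n * sqrt x ^ n)^2 = (real n)^2 * x ^ n" for n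
  proof -
    have "(sqrt x ^ n)^2 = (sqrt x ^ 2) ^ n" by (metis power_mult mult.commute)
    thus ?thesis using assms by (simp add: power_mult_distrib)
  qed
  ultimately show ?thesis by simp
qed

theorem mainTheorem5:
  fixes d :: nat and F k :: real
  assumes "d \<ge> 2" and "0 < F" and "F \<le> 1" and "0 < k" and "k < 1"
  shows "(\<lambda>n::nat. real d * (1 - C_ghz (n * d) (k ^ (n - 1) * F)) * (real n)^2)
           \<longlonglongrightarrow> 0"
proof (rule tendsto_sandwich[where f = "\<lambda>_. 0"])
  define g where "g n = real d * ((1/k) * ((real n)^2 * k ^ n) + 2 * ((real n)^2 * (1/2) ^ n))" for n :: nat
  have "g \<longlonglongrightarrow> real d * ((1/k) * 0 + 2 * 0)"
    unfolding g_def using sq_geom_lim[OF assms(4,5)] sq_geom_lim[of "1/2"]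
    by (intro tendsto_intros) auto
  thus "g \<longlonglongrightarrow> 0" by simp
  show "(\<lambda>n. 0) \<longlonglongrightarrow> (0::real)" by simp
  have b: "0 \<le> real d * (1 - C_ghz (n * d) (k ^ (n - 1) * F)) * (real n)^2 \<and>
        real d * (1 - C_ghz (n * d) (k ^ (n - 1) * F)) * (real n)^2 \<le> g n" if n1: "n \<ge> 1" for n
  proof -
    let ?G = "k ^ (n - 1) * F"
    have N1: "n * d \<ge> 1" using n1 assms(1) by (simp add: Suc_le_eq)
    have G0: "0 < ?G" using assms by simp
    have kn: "k ^ (n-1) \<le> 1" using assms by (simp add: power_le_one)
    have G1: "?G \<le> 1" using assms kn G0 by (simp add: mult_le_one)
    note bd = one_minus_C_bounds[OF N1 G0 G1]
    have "?G \<le> (1/k) * k^n" using n1 assms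
      by (cases n) (auto simp: mult_le_one)
    moreover have "2 / 2^(n*d) \<le> 2 * (1/2::real)^n"
    proof -
      have "(2::real)^n \<le> 2^(n*d)" using assms(1) by (intro power_increasing) auto
      thus ?thesis by (simp add: divide_simps power_one_over)
    qed
    ultimately have "1 - C_ghz (n * d) ?G \<le> (1/k) * k^n + 2 * (1/2)^n" using bd(2) by linarith
    hence "real d * (1 - C_ghz (n * d) ?G) * (real n)^2 \<le> real d * ((1/k) * k^n + 2 * (1/2)^n) * (real n)^2"
      by (intro mult_right_mono mult_left_mono) auto
    moreover have "real d * ((1/k) * k^n + 2 * (1/2)^n) * (real n)^2 = g n"
      unfolding g_def by (simp add: algebra_simps)
    moreover have "0 \<le> real d * (1 - C_ghz (n * d) ?G) * (real n)^2" using bd(1) by simp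
    ultimately show ?thesis by linarith
  qed
  show "\<forall>\<^sub>F n in sequentially. 0 \<le> real d * (1 - C_ghz (n * d) (k ^ (n - 1) * F)) * (real n)^2"
    by (rule eventually_mono[OF eventually_ge_at_top[of "1::nat"]]) (use b in auto)
  show "\<forall>\<^sub>F n in sequentially. real d * (1 - C_ghz (n * d) (k ^ (n - 1) * F)) * (real n)^2 \<le> g n"
    by (rule eventually_mono[OF eventually_ge_at_top[of "1::nat"]]) (use b in auto)
qed

end
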